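(* Let $n$ be even, $1\le q_n\le n/2$, $I_n=\{(i_1,\dots,i_{q_n}):1\le i_1<\dots<i_{q_n}\le n\}$, and for $R=(i_1,\dots,i_{q_n})\in I_n$ let $\Psi_R=\psi_{i_1}\cdots\psi_{i_{q_n}}\,i^{\lfloor q_n/2\rfloor}$. Let $\pi\in\mathcal{P}_2(k)$ and set $$S(\pi,n):=\frac{1}{|I_n|^{k/2}}\sum_{\substack{\alpha:[k]\to I_n\\ \ker\alpha\ge\pi}}\operatorname{tr}(\Psi_{\alpha(1)}\cdots\Psi_{\alpha(k)}).$$ Let $V$ be a block of $\pi$ and $R\in I_n$. Then $$\frac{1}{|I_n|^{(k-2)/2}}\sum_{\substack{\alpha:[k]\to I_n\\ \ker\alpha\ge\pi\\ \alpha(V)=R}}\operatorname{tr}(\Psi_{\alpha(1)}\cdots\Psi_{\alpha(k)})=S(\pi,n);$$ in particular this restricted sum does not depend on the choice of the block $V$ nor of the value $R$.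
   Context: $\psi_1,\dots,\psi_n$ are Majorana fermions: $2^{n/2}\times2^{n/2}$ matrices with $\psi_i\psi_j+\psi_j\psi_i=2\delta_{ij}I$, realized as $\psi_j=\sigma_3^{\otimes(j-1)}\otimes\sigma_1\otimes 1^{\otimes(n/2-j)}$, $\psi_{n/2+j}=\sigma_3^{\otimes(j-1)}\otimes\sigma_2\otimes 1^{\otimes(n/2-j)}$ with Pauli matrices. $\operatorname{tr}$ is the normalized trace. $\mathcal{P}_2(k)$ is the set of pair partitions of $[k]=\{1,\dots,k\}$; $\ker\alpha$ is the partition of $[k]$ into the nonempty level sets of $\alpha$; $\pi\le\sigma$ means each block of $\pi$ lies in a block of $\sigma$; for a block $V$ of $\pi\le\ker\alpha$, $\alpha(V)$ is the common value of $\alpha$ on $V$. *)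

theory Defs
  imports Complex_Main "Jordan_Normal_Form.Matrix" "HOL-Library.FuncSet" "HOL-Library.Disjoint_Sets"
begin

definition sigma1 :: "complex mat" where
  "sigma1 = mat_of_rows_list 2 [[0, 1], [1, 0]]"
definition sigma2 :: "complex mat" where
  "sigma2 = mat_of_rows_list 2 [[0, -\<i>], [\<i>, 0]]"
definition sigma3 :: "complex mat" where
  "sigma3 = mat_of_rows_list 2 [[1, 0], [0, -1]]"
definition id2 :: "complex mat" where
  "id2 = 1\<^sub>m 2"

text \<open>Kronecker (tensor) product, standard convention: first factor most significant.\<close>
definition kron :: "complex mat \<Rightarrow> complex mat \<Rightarrow> complex mat" where
  "kron A B = mat (dim_row A * dim_row B) (dim_col A * dim_col B)
     (\<lambda>(i, j). A $$ (i div dim_row B, j div dim_col B) * B $$ (i mod dim_row B, j mod dim_col B))"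

definition kron_list :: "complex mat list \<Rightarrow> complex mat" where
  "kron_list Ms = foldr kron Ms (1\<^sub>m 1)"

text \<open>Majorana fermions \<psi>_1,...,\<psi>_n (1-based index j), n even.\<close>
definition psi :: "nat \<Rightarrow> nat \<Rightarrow> complex mat" where
  "psi n j = (if j \<le> n div 2
     then kron_list (replicate (j - 1) sigma3 @ [sigma1] @ replicate (n div 2 - j) id2)
     else kron_list (replicate (j - n div 2 - 1) sigma3 @ [sigma2] @ replicate (n - j) id2))"

definition ntr :: "complex mat \<Rightarrow> complex" where
  "ntr A = (\<Sum>i<dim_row A. A $$ (i, i)) / of_nat (dim_row A)"

definition mprod :: "nat \<Rightarrow> complex mat list \<Rightarrow> complex mat" where
  "mprod n Ms = foldr (*) Ms (1\<^sub>m (2 ^ (n div 2)))"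

definition Iset :: "nat \<Rightarrow> nat \<Rightarrow> nat list set" where
  "Iset n q = {R. length R = q \<and> sorted_wrt (<) R \<and> set R \<subseteq> {1..n}}"

definition PsiR :: "nat \<Rightarrow> nat list \<Rightarrow> complex mat" where
  "PsiR n R = (\<i> ^ (length R div 2)) \<cdot>\<^sub>m mprod n (map (psi n) R)"

definition pair_partitions :: "nat \<Rightarrow> nat set set set" where
  "pair_partitions k = {P. partition_on {1..k} P \<and> (\<forall>B\<in>P. card B = 2)}"

definition ker_ge :: "(nat \<Rightarrow> 'b) \<Rightarrow> nat set set \<Rightarrow> bool" where
  "ker_ge \<alpha> P \<longleftrightarrow> (\<forall>B\<in>P. \<forall>x\<in>B. \<forall>y\<in>B. \<alpha> x = \<alpha> y)"

definition trword :: "nat \<Rightarrow> nat \<Rightarrow> (nat \<Rightarrow> nat list) \<Rightarrow> complex" where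
  "trword n k \<alpha> = ntr (mprod n (map (\<lambda>m. PsiR n (\<alpha> m)) [1..<k+1]))"

definition S :: "nat \<Rightarrow> nat \<Rightarrow> nat \<Rightarrow> nat set set \<Rightarrow> complex" where
  "S n q k P = (\<Sum>\<alpha> \<in> {\<alpha>. \<alpha> \<in> {1..k} \<rightarrow>\<^sub>E Iset n q \<and> ker_ge \<alpha> P}. trword n k \<alpha>)
      / of_real (real (card (Iset n q)) powr (real k / 2))"

end

theory Submission
  imports Defs
begin


lemma two_cases: "(i::nat) < 2 \<Longrightarrow> i = 0 \<or> i = 1" by auto

lemma sig_idx:
  "sigma1 = mat 2 2 (\<lambda>(i,j). if i = j then 0 else 1)"
  "sigma2 = mat 2 2 (\<lambda>(i,j). if i = j then 0 else if i = 0 then -\<i> else \<i>)"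
  "sigma3 = mat 2 2 (\<lambda>(i,j). if i = j then (if i = 0 then 1 else -1) else 0)"
  unfolding sigma1_def sigma2_def sigma3_def
  by (auto intro!: eq_matI simp: mat_of_rows_list_def dest!: two_cases)


lemma sum2: "(\<Sum>i<(2::nat). f i) = f 0 + (f 1 :: complex)"
  by (simp add: numeral_2_eq_2)

lemma sig_carrier[simp]: "sigma1 \<in> carrier_mat 2 2" "sigma2 \<in> carrier_mat 2 2" "sigma3 \<in> carrier_mat 2 2"
  "id2 \<in> carrier_mat 2 2"
  by (auto simp: sig_idx id2_def)

lemma pauli_sq: "sigma1 * sigma1 = 1\<^sub>m 2" "sigma2 * sigma2 = 1\<^sub>m 2" "sigma3 * sigma3 = 1\<^sub>m 2"
  by (auto intro!: eq_matI simp: sig_idx scalar_prod_def sum2 lessThan_atLeast0[symmetric] dest!: two_cases)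

lemma pauli_anti:
  "sigma1 * sigma2 = (-1) \<cdot>\<^sub>m (sigma2 * sigma1)"
  "sigma2 * sigma1 = (-1) \<cdot>\<^sub>m (sigma1 * sigma2)"
  "sigma1 * sigma3 = (-1) \<cdot>\<^sub>m (sigma3 * sigma1)"
  "sigma3 * sigma1 = (-1) \<cdot>\<^sub>m (sigma1 * sigma3)"
  "sigma2 * sigma3 = (-1) \<cdot>\<^sub>m (sigma3 * sigma2)"
  "sigma3 * sigma2 = (-1) \<cdot>\<^sub>m (sigma2 * sigma3)"
  by (auto intro!: eq_matI simp: sig_idx scalar_prod_def sum2 lessThan_atLeast0[symmetric] dest!: two_cases)

lemma sum_prod_idx: "(\<Sum>l<a*b. f l) = (\<Sum>u<a. \<Sum>v<(b::nat). (f (u*b+v) :: complex))"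
proof (induction a)
  case 0 then show ?case by simp
next
  case (Suc a)
  have "(\<Sum>l<Suc a*b. f l) = (\<Sum>l<a*b. f l) + (\<Sum>l\<in>{a*b..<a*b+b}. f l)"
    by (simp add: add.commute sum.atLeastLessThan_concat lessThan_atLeast0)
  also have "(\<Sum>l\<in>{a*b..<a*b+b}. f l) = (\<Sum>v<b. f (a*b+v))"
    using sum.shift_bounds_nat_ivl[of f 0 "a*b" b] by (simp add: lessThan_atLeast0 add.commute)
  finally show ?case using Suc by simp
qed

lemma kron_dim[simp]: "dim_row (kron A B) = dim_row A * dim_row B" "dim_col (kron A B) = dim_col A * dim_col B"
  unfolding kron_def by simp_all

lemma div_lt: "i < a * (b::nat) \<Longrightarrow> i div b < a"
  by (simp add: less_mult_imp_div_less)
lemma mod_lt: "i < a * (b::nat) \<Longrightarrow> i mod b < b"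
  by (cases "b = 0") auto


lemma kron_carrier: "A \<in> carrier_mat a a \<Longrightarrow> B \<in> carrier_mat b b \<Longrightarrow> kron A B \<in> carrier_mat (a*b) (a*b)"
  by (intro carrier_matI) (auto dest!: carrier_matD)

lemma kron_idx: "i < dim_row A * dim_row B \<Longrightarrow> j < dim_col A * dim_col B \<Longrightarrow>
  kron A B $$ (i,j) = A $$ (i div dim_row B, j div dim_col B) * B $$ (i mod dim_row B, j mod dim_col B)"
  unfolding kron_def by simp




lemma idx_lt: "u < a \<Longrightarrow> v < b \<Longrightarrow> u*b+v < a*(b::nat)"
proof -
  assume u: "u < a" and v: "v < b"
  have "u*b+v < Suc u * b" using v by simp
  also have "\<dots> \<le> a*b" using u by (intro mult_le_mono1) simp
  finally show ?thesis .
qed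
lemma kron_mult:
  assumes A: "A \<in> carrier_mat a a" and C: "C \<in> carrier_mat a a"
    and B: "B \<in> carrier_mat b b" and D: "D \<in> carrier_mat b b"
  shows "kron A B * kron C D = kron (A * C) (B * D)"
proof -
  have dA: "dim_row A = a" "dim_col A = a" using A by auto
  have dB: "dim_row B = b" "dim_col B = b" using B by auto
  have dC: "dim_row C = a" "dim_col C = a" using C by auto
  have dD: "dim_row D = b" "dim_col D = b" using D by auto
  show ?thesis
proof (rule eq_matI)
  fix i j assume i: "i < dim_row (kron (A * C) (B * D))" and j: "j < dim_col (kron (A * C) (B * D))"
  have ia: "i < a*b" and ja: "j < a*b" using i j dA dB dC dD by auto
  have "(kron A B * kron C D) $$ (i,j) = (\<Sum>l<a*b. kron A B $$ (i,l) * kron C D $$ (l,j))"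
    using ia ja dA dB dC dD by (simp add: scalar_prod_def lessThan_atLeast0 col_def row_def)
  also have "\<dots> = (\<Sum>u<a. \<Sum>v<b. kron A B $$ (i,u*b+v) * kron C D $$ (u*b+v,j))"
    by (rule sum_prod_idx)
  also have "\<dots> = (\<Sum>u<a. \<Sum>v<b. (A $$ (i div b, u) * C $$ (u, j div b)) * (B $$ (i mod b, v) * D $$ (v, j mod b)))"
  proof (intro sum.cong refl)
    fix u v assume u: "u \<in> {..<a}" and v: "v \<in> {..<b}"
    have l: "u*b+v < a*b" using u v by (simp add: idx_lt)
    show "kron A B $$ (i,u*b+v) * kron C D $$ (u*b+v,j) = (A $$ (i div b, u) * C $$ (u, j div b)) * (B $$ (i mod b, v) * D $$ (v, j mod b))"
    proof -
      have "(u*b+v) div b = u" "(u*b+v) mod b = v" using v by auto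
      then show ?thesis using ia ja l by (simp add: kron_idx dA dB dC dD)
    qed
  qed
  also have "\<dots> = (\<Sum>u<a. A $$ (i div b, u) * C $$ (u, j div b)) * (\<Sum>v<b. B $$ (i mod b, v) * D $$ (v, j mod b))"
    by (simp add: sum_product)
  also have "\<dots> = kron (A * C) (B * D) $$ (i,j)"
    using ia ja A B C D div_lt[OF ia] div_lt[OF ja] mod_lt[OF ia] mod_lt[OF ja]
  proof -
    have "i div b < a" "j div b < a" "i mod b < b" "j mod b < b"
      using div_lt[OF ia] div_lt[OF ja] mod_lt[OF ia] mod_lt[OF ja] by auto
    then show ?thesis using ia ja
      by (simp add: kron_idx scalar_prod_def lessThan_atLeast0 col_def row_def dA dB dC dD)
  qed
  finally show "(kron A B * kron C D) $$ (i,j) = kron (A * C) (B * D) $$ (i,j)" .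
qed (simp_all add: dA dB dC dD)
qed

lemma kron_smult: "kron (c \<cdot>\<^sub>m A) (e \<cdot>\<^sub>m B) = (c * e) \<cdot>\<^sub>m kron A B"
  by (rule eq_matI) (simp_all add: kron_idx div_lt mod_lt)




lemma kron_one: "0 < b \<Longrightarrow> kron (1\<^sub>m a) (1\<^sub>m b) = 1\<^sub>m (a * b)"
proof (rule eq_matI)
  fix i j assume b: "0 < b" and i: "i < dim_row (1\<^sub>m (a * b))" and j: "j < dim_col (1\<^sub>m (a * b))"
  have ia: "i < a*b" and ja: "j < a*b" using i j by auto
  have e: "i div b = j div b \<Longrightarrow> i mod b = j mod b \<Longrightarrow> i = j"
    by (metis div_mult_mod_eq)
  show "kron (1\<^sub>m a) (1\<^sub>m b) $$ (i, j) = 1\<^sub>m (a * b) $$ (i, j)"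
    using ia ja div_lt[OF ia] div_lt[OF ja] mod_lt[OF ia] mod_lt[OF ja] e
    by (simp add: kron_idx)
qed auto

lemma kron_list_Nil: "kron_list [] = 1\<^sub>m 1" by (simp add: kron_list_def)
lemma kron_list_Cons: "kron_list (M # Ms) = kron M (kron_list Ms)" by (simp add: kron_list_def)

lemma kron_list_carrier: "set Ms \<subseteq> carrier_mat 2 2 \<Longrightarrow> kron_list Ms \<in> carrier_mat (2^length Ms) (2^length Ms)"
proof (induction Ms)
  case Nil then show ?case by (simp add: kron_list_Nil)
next
  case (Cons M Ms)
  then have "M \<in> carrier_mat 2 2" "kron_list Ms \<in> carrier_mat (2^length Ms) (2^length Ms)" by auto
  then show ?case unfolding kron_list_Cons using kron_carrier by fastforce
qed

lemma kron_list_id: "kron_list (replicate m id2) = 1\<^sub>m (2^m)"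
  by (induction m) (simp_all add: kron_list_Nil kron_list_Cons id2_def kron_one)

lemma one_smult_mat: "(1::complex) \<cdot>\<^sub>m A = A"
  by (rule eq_matI) auto


definition ps :: "nat \<Rightarrow> nat \<Rightarrow> complex mat" where
  "ps m j = kron_list (if j \<le> m then replicate (j - 1) sigma3 @ [sigma1] @ replicate (m - j) id2
     else replicate (j - m - 1) sigma3 @ [sigma2] @ replicate (2*m - j) id2)"

lemma psi_ps: "even n \<Longrightarrow> psi n j = ps (n div 2) j"
  unfolding psi_def ps_def by (auto elim!: evenE)

lemma ps_carrier: "1 \<le> j \<Longrightarrow> j \<le> 2*m \<Longrightarrow> ps m j \<in> carrier_mat (2^m) (2^m)"
proof -
  assume j: "1 \<le> j" "j \<le> 2*m"
  let ?L = "(if j \<le> m then replicate (j - 1) sigma3 @ [sigma1] @ replicate (m - j) id2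
     else replicate (j - m - 1) sigma3 @ [sigma2] @ replicate (2*m - j) id2)"
  have "length ?L = m" using j by auto
  moreover have "set ?L \<subseteq> carrier_mat 2 2" by auto
  ultimately show ?thesis unfolding ps_def using kron_list_carrier[of ?L] by simp
qed

definition hdp :: "nat \<Rightarrow> nat \<Rightarrow> complex mat" where
  "hdp m j = (if j = 1 then sigma1 else if j = m + 2 then sigma2 else sigma3)"
definition tlp :: "nat \<Rightarrow> nat \<Rightarrow> complex mat" where
  "tlp m j = (if j = 1 \<or> j = m + 2 then 1\<^sub>m (2^m) else if j \<le> m + 1 then ps m (j - 1) else ps m (j - 2))"

lemma ps_split: "1 \<le> j \<Longrightarrow> j \<le> 2 * Suc m \<Longrightarrow> ps (Suc m) j = kron (hdp m j) (tlp m j)"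
proof -
  assume j: "1 \<le> j" "j \<le> 2 * Suc m"
  consider "j = 1" | "j = m + 2" | "2 \<le> j \<and> j \<le> m + 1" | "m + 3 \<le> j" using j by linarith
  then show ?thesis
  proof cases
    case 1 then show ?thesis
      by (simp add: ps_def hdp_def tlp_def kron_list_Cons kron_list_id)
  next
    case 2
    then have "replicate (j - Suc m - 1) sigma3 @ [sigma2] @ replicate (2 * Suc m - j) id2
       = sigma2 # replicate m id2" by auto
    then show ?thesis using 2
      by (simp add: ps_def hdp_def tlp_def kron_list_Cons kron_list_id)
  next
    case 3
    then have "replicate (j - 1) sigma3 @ [sigma1] @ replicate (Suc m - j) id2
       = sigma3 # (replicate (j - 1 - 1) sigma3 @ [sigma1] @ replicate (m - (j - 1)) id2)"
      by (cases "j - 1") auto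
    moreover have "j - 1 \<le> m" "j \<le> Suc m" "j \<noteq> 1" "j \<noteq> m + 2" using 3 by auto
    ultimately show ?thesis
      unfolding ps_def hdp_def tlp_def by (simp add: kron_list_Cons)
  next
    case 4
    then have "replicate (j - Suc m - 1) sigma3 @ [sigma2] @ replicate (2 * Suc m - j) id2
       = sigma3 # (replicate (j - 2 - m - 1) sigma3 @ [sigma2] @ replicate (2 * m - (j - 2)) id2)"
      by (cases "j - Suc m - 1") auto
    moreover have "\<not> j - 2 \<le> m" "\<not> j \<le> Suc m" "j \<noteq> 1" "j \<noteq> m + 2" "\<not> j \<le> m + 1" using 4 by auto
    ultimately show ?thesis
      unfolding ps_def hdp_def tlp_def by (simp add: kron_list_Cons)
  qed
qed


lemma hdp_carrier: "hdp m j \<in> carrier_mat 2 2"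
  by (simp add: hdp_def)

definition idxp :: "nat \<Rightarrow> nat \<Rightarrow> nat" where
  "idxp m x = (if x \<le> m + 1 then x - 1 else x - 2)"

lemma tlp_ns: "\<not> (x = 1 \<or> x = m + 2) \<Longrightarrow> tlp m x = ps m (idxp m x)"
  by (simp add: tlp_def idxp_def)

lemma idxp_range: "1 \<le> x \<Longrightarrow> x \<le> 2 * Suc m \<Longrightarrow> \<not> (x = 1 \<or> x = m + 2) \<Longrightarrow> 1 \<le> idxp m x \<and> idxp m x \<le> 2 * m"
  by (auto simp: idxp_def)

lemma idxp_inj: "\<not> (x = 1 \<or> x = m + 2) \<Longrightarrow> \<not> (y = 1 \<or> y = m + 2) \<Longrightarrow> 1 \<le> x \<Longrightarrow> 1 \<le> y \<Longrightarrow> x \<noteq> y \<Longrightarrow> idxp m x \<noteq> idxp m y"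
  by (auto simp: idxp_def)

lemma tlp_carrier: "1 \<le> j \<Longrightarrow> j \<le> 2 * Suc m \<Longrightarrow> tlp m j \<in> carrier_mat (2^m) (2^m)"
proof -
  assume j: "1 \<le> j" "j \<le> 2 * Suc m"
  show ?thesis
  proof (cases "j = 1 \<or> j = m + 2")
    case True then show ?thesis by (auto simp: tlp_def)
  next
    case False then show ?thesis using idxp_range[OF j False] ps_carrier by (simp add: tlp_ns)
  qed
qed

lemma ps_rel: "1 \<le> i \<Longrightarrow> i \<le> 2*m \<Longrightarrow> 1 \<le> j \<Longrightarrow> j \<le> 2*m \<Longrightarrow>
  ps m j * ps m i = (if i = j then 1\<^sub>m (2^m) else (-1) \<cdot>\<^sub>m (ps m i * ps m j))"
proof (induction m arbitrary: i j)
  case 0 then show ?case by simp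
next
  case (Suc m)
  have mul: "ps (Suc m) x * ps (Suc m) y = kron (hdp m x * hdp m y) (tlp m x * tlp m y)"
    if "1 \<le> x" "x \<le> 2 * Suc m" "1 \<le> y" "y \<le> 2 * Suc m" for x y
    using that by (simp add: ps_split kron_mult[OF hdp_carrier hdp_carrier tlp_carrier tlp_carrier])
  have Ti: "tlp m i \<in> carrier_mat (2^m) (2^m)" and Tj: "tlp m j \<in> carrier_mat (2^m) (2^m)"
    using Suc.prems tlp_carrier by auto
  show ?case
  proof (cases "i = j")
    case True
    have h: "hdp m i * hdp m i = 1\<^sub>m 2" by (simp add: hdp_def pauli_sq)
    have t: "tlp m i * tlp m i = 1\<^sub>m (2^m)"
    proof (cases "i = 1 \<or> i = m + 2")
      case True then show ?thesis by (auto simp: tlp_def)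
    next
      case False
      then show ?thesis using Suc.IH idxp_range[OF _ _ False] Suc.prems by (simp add: tlp_ns)
    qed
    show ?thesis using True mul[of i i] Suc.prems h t by (simp add: kron_one)
  next
    case False
    have "\<exists>a b. a * b = -1 \<and> hdp m j * hdp m i = a \<cdot>\<^sub>m (hdp m i * hdp m j)
                \<and> tlp m j * tlp m i = b \<cdot>\<^sub>m (tlp m i * tlp m j)"
    proof (cases "i = 1 \<or> i = m + 2"; cases "j = 1 \<or> j = m + 2")
      assume i: "i = 1 \<or> i = m + 2" and j: "j = 1 \<or> j = m + 2"
      then have "hdp m j * hdp m i = (-1) \<cdot>\<^sub>m (hdp m i * hdp m j)" using False
        by (auto simp: hdp_def intro: pauli_anti)
      moreover have "tlp m j * tlp m i = 1 \<cdot>\<^sub>m (tlp m i * tlp m j)" using i j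
        by (auto simp: tlp_def one_smult_mat)
      ultimately show ?thesis by (intro exI[where x="-1::complex"] exI[where x="1::complex"] conjI) simp_all
    next
      assume i: "i = 1 \<or> i = m + 2" and j: "\<not> (j = 1 \<or> j = m + 2)"
      then have "hdp m j * hdp m i = (-1) \<cdot>\<^sub>m (hdp m i * hdp m j)"
        by (auto simp: hdp_def intro: pauli_anti)
      moreover have "tlp m j * tlp m i = 1 \<cdot>\<^sub>m (tlp m i * tlp m j)" using i Tj
        by (auto simp: tlp_def one_smult_mat)
      ultimately show ?thesis by (intro exI[where x="-1::complex"] exI[where x="1::complex"] conjI) simp_all
    next
      assume i: "\<not> (i = 1 \<or> i = m + 2)" and j: "j = 1 \<or> j = m + 2"
      then have "hdp m j * hdp m i = (-1) \<cdot>\<^sub>m (hdp m i * hdp m j)"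
        by (auto simp: hdp_def intro: pauli_anti)
      moreover have "tlp m j * tlp m i = 1 \<cdot>\<^sub>m (tlp m i * tlp m j)" using j Ti
        by (auto simp: tlp_def one_smult_mat)
      ultimately show ?thesis by (intro exI[where x="-1::complex"] exI[where x="1::complex"] conjI) simp_all
    next
      assume i: "\<not> (i = 1 \<or> i = m + 2)" and j: "\<not> (j = 1 \<or> j = m + 2)"
      then have "hdp m j * hdp m i = 1 \<cdot>\<^sub>m (hdp m i * hdp m j)"
        by (auto simp: hdp_def one_smult_mat)
      moreover have "tlp m j * tlp m i = (-1) \<cdot>\<^sub>m (tlp m i * tlp m j)"
        using i j Suc.IH[of "idxp m i" "idxp m j"] idxp_range[of i m] idxp_range[of j m] Suc.prems
          idxp_inj[OF i j _ _ False]
        by (simp add: tlp_ns)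
      ultimately show ?thesis by (intro exI[where x="1::complex"] exI[where x="-1::complex"] conjI) simp_all
    qed
    then obtain a b where ab: "a * b = -1" "hdp m j * hdp m i = a \<cdot>\<^sub>m (hdp m i * hdp m j)"
                "tlp m j * tlp m i = b \<cdot>\<^sub>m (tlp m i * tlp m j)" by blast
    have "ps (Suc m) j * ps (Suc m) i = kron (hdp m j * hdp m i) (tlp m j * tlp m i)"
      using mul Suc.prems by simp
    also have "\<dots> = (-1) \<cdot>\<^sub>m kron (hdp m i * hdp m j) (tlp m i * tlp m j)"
      using ab by (simp add: kron_smult)
    also have "\<dots> = (-1) \<cdot>\<^sub>m (ps (Suc m) i * ps (Suc m) j)"
      using mul Suc.prems by simp
    finally show ?thesis using False by simp
  qed
qed



lemma psi_carrier: "even n \<Longrightarrow> 1 \<le> i \<Longrightarrow> i \<le> n \<Longrightarrow> psi n i \<in> carrier_mat (2^(n div 2)) (2^(n div 2))"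
  by (simp add: psi_ps ps_carrier)

lemma psi_sq: "even n \<Longrightarrow> 1 \<le> i \<Longrightarrow> i \<le> n \<Longrightarrow> psi n i * psi n i = 1\<^sub>m (2^(n div 2))"
  using ps_rel[of i "n div 2" i] by (simp add: psi_ps)

lemma psi_anti: "even n \<Longrightarrow> 1 \<le> i \<Longrightarrow> i \<le> n \<Longrightarrow> 1 \<le> j \<Longrightarrow> j \<le> n \<Longrightarrow> i \<noteq> j \<Longrightarrow>
   psi n j * psi n i = (-1) \<cdot>\<^sub>m (psi n i * psi n j)"
  using ps_rel[of i "n div 2" j] by (simp add: psi_ps)

lemma smult_smult_mat: "a \<cdot>\<^sub>m (b \<cdot>\<^sub>m A) = (a * b :: complex) \<cdot>\<^sub>m A"
  by (rule eq_matI) auto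

lemma mprod_Nil: "mprod n [] = 1\<^sub>m (2^(n div 2))" by (simp add: mprod_def)
lemma mprod_Cons: "mprod n (M # Ms) = M * mprod n Ms" by (simp add: mprod_def)

lemma mprod_carrier: "set Ms \<subseteq> carrier_mat (2^(n div 2)) (2^(n div 2)) \<Longrightarrow> mprod n Ms \<in> carrier_mat (2^(n div 2)) (2^(n div 2))"
  by (induction Ms) (auto simp: mprod_Nil mprod_Cons)

lemma mprod_append: "set xs \<subseteq> carrier_mat (2^(n div 2)) (2^(n div 2)) \<Longrightarrow> set ys \<subseteq> carrier_mat (2^(n div 2)) (2^(n div 2)) \<Longrightarrow>
   mprod n (xs @ ys) = mprod n xs * mprod n ys"
proof (induction xs)
  case Nil then show ?case using mprod_carrier[of ys n] by (simp add: mprod_Nil)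
next
  case (Cons x xs)
  then have c: "x \<in> carrier_mat (2^(n div 2)) (2^(n div 2))" "mprod n xs \<in> carrier_mat (2^(n div 2)) (2^(n div 2))"
     "mprod n ys \<in> carrier_mat (2^(n div 2)) (2^(n div 2))" using mprod_carrier by auto
  show ?case using Cons by (simp add: mprod_Cons assoc_mult_mat[OF c])
qed

lemma mprod_smult: "(\<And>m. m \<in> set ms \<Longrightarrow> X m \<in> carrier_mat (2^(n div 2)) (2^(n div 2))) \<Longrightarrow>
   mprod n (map (\<lambda>m. c m \<cdot>\<^sub>m X m) ms) = prod_list (map c ms) \<cdot>\<^sub>m mprod n (map X ms)"
proof (induction ms)
  case Nil then show ?case by (simp add: mprod_Nil one_smult_mat)
next
  case (Cons m ms)
  have c: "X m \<in> carrier_mat (2^(n div 2)) (2^(n div 2))" "mprod n (map X ms) \<in> carrier_mat (2^(n div 2)) (2^(n div 2))"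
    using Cons.prems mprod_carrier[of "map X ms" n] by auto
  have "mprod n (map (\<lambda>m. c m \<cdot>\<^sub>m X m) (m # ms)) = (c m \<cdot>\<^sub>m X m) * (prod_list (map c ms) \<cdot>\<^sub>m mprod n (map X ms))"
    using Cons by (simp add: mprod_Cons)
  also have "\<dots> = (c m * prod_list (map c ms)) \<cdot>\<^sub>m (X m * mprod n (map X ms))"
    using c by (simp add: mult_smult_assoc_mat[OF c(1) smult_carrier_mat[OF c(2)]] mult_smult_distrib[OF c] smult_smult_mat)
  finally show ?case by (simp add: mprod_Cons)
qed

definition trc :: "complex mat \<Rightarrow> complex" where
  "trc A = (\<Sum>i<dim_row A. A $$ (i, i))"

lemma trc_comm: "A \<in> carrier_mat d d \<Longrightarrow> B \<in> carrier_mat d d \<Longrightarrow> trc (A * B) = trc (B * A)"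
proof -
  assume A: "A \<in> carrier_mat d d" and B: "B \<in> carrier_mat d d"
  have dA: "dim_row A = d" "dim_col A = d" using A by auto
  have dB: "dim_row B = d" "dim_col B = d" using B by auto
  have "trc (A * B) = (\<Sum>i<d. \<Sum>j<d. A $$ (i,j) * B $$ (j,i))"
    unfolding trc_def by (simp add: dA dB scalar_prod_def lessThan_atLeast0 col_def row_def)
  also have "\<dots> = (\<Sum>j<d. \<Sum>i<d. B $$ (j,i) * A $$ (i,j))"
    by (subst sum.swap) (simp add: mult.commute)
  also have "\<dots> = trc (B * A)"
    unfolding trc_def by (simp add: dA dB scalar_prod_def lessThan_atLeast0 col_def row_def)
  finally show ?thesis .
qed

lemma trc_smult: "A \<in> carrier_mat d d \<Longrightarrow> trc (c \<cdot>\<^sub>m A) = c * trc A"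
  unfolding trc_def by (auto simp: sum_distrib_left)

lemma ntr_trc: "ntr A = trc A / of_nat (dim_row A)"
  by (simp add: ntr_def trc_def)



lemma intertw_list:
  assumes U: "U \<in> carrier_mat (2^(n div 2)) (2^(n div 2))"
    and X: "\<And>m. m \<in> set ms \<Longrightarrow> X m \<in> carrier_mat (2^(n div 2)) (2^(n div 2))"
    and Y: "\<And>m. m \<in> set ms \<Longrightarrow> Y m \<in> carrier_mat (2^(n div 2)) (2^(n div 2))"
    and I: "\<And>m. m \<in> set ms \<Longrightarrow> U * X m = c m \<cdot>\<^sub>m (Y m * U)"
  shows "U * mprod n (map X ms) = prod_list (map c ms) \<cdot>\<^sub>m (mprod n (map Y ms) * U)"
  using X Y I
proof (induction ms)
  case Nil then show ?case using U by (simp add: mprod_Nil one_smult_mat)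
next
  case (Cons m ms)
  let ?D = "2^(n div 2)"
  have cX: "X m \<in> carrier_mat ?D ?D" and cY: "Y m \<in> carrier_mat ?D ?D" using Cons.prems by auto
  have cM: "mprod n (map X ms) \<in> carrier_mat ?D ?D" using Cons.prems mprod_carrier[of "map X ms" n] by auto
  have cM': "mprod n (map Y ms) \<in> carrier_mat ?D ?D" using Cons.prems mprod_carrier[of "map Y ms" n] by auto
  have IH: "U * mprod n (map X ms) = prod_list (map c ms) \<cdot>\<^sub>m (mprod n (map Y ms) * U)"
    using Cons by auto
  have "U * mprod n (map X (m # ms)) = (U * X m) * mprod n (map X ms)"
    by (simp add: mprod_Cons assoc_mult_mat[OF U cX cM])
  also have "\<dots> = (c m \<cdot>\<^sub>m (Y m * U)) * mprod n (map X ms)" using Cons.prems by simp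
  also have "\<dots> = c m \<cdot>\<^sub>m (Y m * (U * mprod n (map X ms)))"
    using U cY cM by (simp add: mult_smult_assoc_mat[of _ ?D ?D] assoc_mult_mat[OF cY U cM])
  also have "\<dots> = c m \<cdot>\<^sub>m (Y m * (prod_list (map c ms) \<cdot>\<^sub>m (mprod n (map Y ms) * U)))"
    using IH by simp
  also have "\<dots> = (c m * prod_list (map c ms)) \<cdot>\<^sub>m ((Y m * mprod n (map Y ms)) * U)"
  proof -
    have cMU: "mprod n (map Y ms) * U \<in> carrier_mat ?D ?D" using cM' U by simp
    show ?thesis using U cY cM' by (simp add: mult_smult_distrib[OF cY cMU] smult_smult_mat assoc_mult_mat[OF cY cM' U])
  qed
  finally show ?case by (simp add: mprod_Cons)
qed

lemma intertw_trc:
  assumes U: "U \<in> carrier_mat d d" and W: "W \<in> carrier_mat d d" and W': "W' \<in> carrier_mat d d"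
    and UU: "U * U = 2 \<cdot>\<^sub>m 1\<^sub>m d" and I: "U * W = c \<cdot>\<^sub>m (W' * U)"
  shows "trc W = c * trc W'"
proof -
  have W1: "W * (2 \<cdot>\<^sub>m 1\<^sub>m d) = 2 \<cdot>\<^sub>m W" using W by (simp add: mult_smult_distrib[OF W one_carrier_mat])
  have W1': "W' * (2 \<cdot>\<^sub>m 1\<^sub>m d) = 2 \<cdot>\<^sub>m W'" using W' by (simp add: mult_smult_distrib[OF W' one_carrier_mat])
  have "2 * trc W = trc (W * (U * U))" using W by (simp add: UU W1 trc_smult[of _ d])
  also have "\<dots> = trc ((W * U) * U)" using W U by simp
  also have "\<dots> = trc (U * (W * U))" using W U by (intro trc_comm[of _ d]) auto
  also have "\<dots> = trc ((U * W) * U)" using W U by simp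
  also have "\<dots> = trc ((c \<cdot>\<^sub>m (W' * U)) * U)" using I by simp
  also have "\<dots> = c * trc (W' * (U * U))"
    using W' U by (simp add: mult_smult_assoc_mat[of _ d d] trc_smult[of _ d])
  also have "\<dots> = c * (2 * trc W')" using W' by (simp add: UU W1' trc_smult[of _ d])
  finally show ?thesis by simp
qed






lemma prod_list_sq: "(\<And>m. m \<in> set ms \<Longrightarrow> c m * c m = (1::complex)) \<Longrightarrow>
  prod_list (map c ms) * prod_list (map c ms) = 1"
proof (induction ms)
  case Nil then show ?case by simp
next
  case (Cons m ms)
  then have "c m * c m = 1" "prod_list (map c ms) * prod_list (map c ms) = 1" by auto
  then show ?case by (simp add: algebra_simps)
qed

lemma split_adj: "sorted_wrt (<) R \<Longrightarrow> a \<in> set R \<Longrightarrow> Suc a \<in> set R \<Longrightarrow>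
  \<exists>xs ys. R = xs @ a # Suc a # ys \<and> (\<forall>x\<in>set xs. x < a) \<and> (\<forall>y\<in>set ys. Suc a < y)"
proof -
  assume s: "sorted_wrt (<) R" and a: "a \<in> set R" and b: "Suc a \<in> set R"
  obtain xs zs where R: "R = xs @ a # zs" using a by (meson split_list)
  have xs: "\<forall>x\<in>set xs. x < a" and zs: "\<forall>z\<in>set zs. a < z" and szs: "sorted_wrt (<) zs"
    using s R by (auto simp: sorted_wrt_append)
  have "Suc a \<notin> set xs" using xs by auto
  then have "Suc a \<in> set zs" using b R by auto
  then obtain ys1 ys where zs': "zs = ys1 @ Suc a # ys" by (meson split_list)
  have "ys1 = []"
  proof (rule ccontr)
    assume "ys1 \<noteq> []"
    then obtain y where y: "y \<in> set ys1" by (cases ys1) auto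
    then have "a < y" using zs zs' by auto
    moreover have "y < Suc a" using szs zs' y by (auto simp: sorted_wrt_append)
    ultimately show False by simp
  qed
  then have "R = xs @ a # Suc a # ys" using R zs' by simp
  moreover have "\<forall>y\<in>set ys. Suc a < y" using szs zs' \<open>ys1 = []\<close> by simp
  ultimately show ?thesis using xs by blast
qed


lemma pair_prod:
  assumes P: "P \<in> pair_partitions k" and ker: "ker_ge \<alpha> P"
    and sq: "\<And>m. m \<in> {1..k} \<Longrightarrow> f (\<alpha> m) * f (\<alpha> m) = (1::complex)"
  shows "(\<Prod>m\<in>{1..k}. f (\<alpha> m)) = 1"
proof -
  have po: "partition_on {1..k} P" and c2: "\<forall>B\<in>P. card B = 2" using P by (auto simp: pair_partitions_def)
  have U: "\<Union>P = {1..k}" using po by (auto simp: partition_on_def)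
  have dj: "\<forall>A\<in>P. \<forall>B\<in>P. A \<noteq> B \<longrightarrow> A \<inter> B = {}"
    using partition_onD2[OF po] by (auto simp: disjoint_def)
  have fin: "\<forall>A\<in>P. finite A" using c2 by (metis card.infinite zero_neq_numeral)
  have "(\<Prod>m\<in>{1..k}. f (\<alpha> m)) = (\<Prod>B\<in>P. \<Prod>m\<in>B. f (\<alpha> m))"
    unfolding U[symmetric] by (subst prod.Union_disjoint[OF fin dj]) simp
  also have "\<dots> = (\<Prod>B\<in>P. 1)"
  proof (rule prod.cong[OF refl])
    fix B assume B: "B \<in> P"
    then obtain x y where xy: "B = {x, y}" "x \<noteq> y" using c2 card_2_iff by metis
    have "\<alpha> x = \<alpha> y" using ker B xy unfolding ker_ge_def by auto
    moreover have "x \<in> {1..k}" using B xy U by blast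
    ultimately show "(\<Prod>m\<in>B. f (\<alpha> m)) = 1" using xy sq[of x] by simp
  qed
  finally show ?thesis by simp
qed

definition tau :: "nat \<Rightarrow> nat \<Rightarrow> nat" where
  "tau a x = (if x = a then a + 1 else if x = a + 1 then a else x)"

context
  fixes n a :: nat
  assumes ev: "even n" and a1: "1 \<le> a" and a2: "a + 1 \<le> n"
begin

definition "UU = psi n a + psi n (a + 1)"

lemma cA: "psi n a \<in> carrier_mat (2^(n div 2)) (2^(n div 2))" using psi_carrier ev a1 a2 by simp
lemma cB: "psi n (a+1) \<in> carrier_mat (2^(n div 2)) (2^(n div 2))" using psi_carrier ev a1 a2 by simp
lemma cU: "UU \<in> carrier_mat (2^(n div 2)) (2^(n div 2))" using cA cB by (simp add: UU_def)

lemma AA: "psi n a * psi n a = 1\<^sub>m (2^(n div 2))" using psi_sq ev a1 a2 by simp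
lemma BB: "psi n (a+1) * psi n (a+1) = 1\<^sub>m (2^(n div 2))" using psi_sq[of n "a+1"] ev a1 a2 by simp
lemma BA: "psi n (a+1) * psi n a = (-1) \<cdot>\<^sub>m (psi n a * psi n (a+1))"
  using psi_anti[of n a "a+1"] ev a1 a2 by simp
lemma BB': "psi n (Suc a) * psi n (Suc a) = 1\<^sub>m (2^(n div 2))" using BB by simp

lemma UU_sq: "UU * UU = 2 \<cdot>\<^sub>m 1\<^sub>m (2^(n div 2))"
proof -
  let ?A = "psi n a" and ?B = "psi n (a+1)" and ?D = "2^(n div 2)"
  have "UU * UU = (?A * ?A + ?B * ?A) + (?A * ?B + ?B * ?B)"
    unfolding UU_def using cA cB
    by (simp add: add_mult_distrib_mat[of _ ?D ?D] mult_add_distrib_mat[of _ ?D ?D])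
  also have "\<dots> = (1\<^sub>m ?D + (-1) \<cdot>\<^sub>m (?A * ?B)) + (?A * ?B + 1\<^sub>m ?D)" by (simp only: AA BB BA)
  also have "\<dots> = 2 \<cdot>\<^sub>m 1\<^sub>m ?D"
    using cA cB by (intro eq_matI) auto
  finally show ?thesis .
qed

lemma U_psi: "1 \<le> l \<Longrightarrow> l \<le> n \<Longrightarrow>
  UU * psi n l = (if l = a \<or> l = a + 1 then 1 else -1) \<cdot>\<^sub>m (psi n (tau a l) * UU)"
proof -
  assume l: "1 \<le> l" "l \<le> n"
  let ?A = "psi n a" and ?B = "psi n (a+1)" and ?D = "2^(n div 2)" and ?L = "psi n l"
  have cL: "?L \<in> carrier_mat ?D ?D" using psi_carrier ev l by simp
  consider "l = a" | "l = a + 1" | "l \<noteq> a \<and> l \<noteq> a + 1" by blast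
  then show ?thesis
  proof cases
    case 1
    have "UU * ?A = ?A * ?A + ?B * ?A" unfolding UU_def using cA cB by (simp add: add_mult_distrib_mat[of _ ?D ?D])
    moreover have "?B * UU = ?B * ?A + ?B * ?B" unfolding UU_def using cA cB by (simp add: mult_add_distrib_mat[of _ ?D ?D])
    moreover have "1\<^sub>m ?D + ?B * ?A = 1 \<cdot>\<^sub>m (?B * ?A + 1\<^sub>m ?D)" using cA cB by (intro eq_matI) auto
    ultimately show ?thesis using 1 by (simp add: tau_def AA BB BB')
  next
    case 2
    have "UU * ?B = ?A * ?B + ?B * ?B" unfolding UU_def using cA cB by (simp add: add_mult_distrib_mat[of _ ?D ?D])
    moreover have "?A * UU = ?A * ?A + ?A * ?B" unfolding UU_def using cA cB by (simp add: mult_add_distrib_mat[of _ ?D ?D])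
    moreover have "?A * ?B + 1\<^sub>m ?D = 1 \<cdot>\<^sub>m (1\<^sub>m ?D + ?A * ?B)" using cA cB by (intro eq_matI) auto
    ultimately show ?thesis using 2 by (simp add: tau_def AA BB BB')
  next
    case 3
    have x1: "?A * ?L = (-1) \<cdot>\<^sub>m (?L * ?A)" using psi_anti[of n l a] ev l a1 a2 3 by simp
    have x2: "?B * ?L = (-1) \<cdot>\<^sub>m (?L * ?B)" using psi_anti[of n l "a+1"] ev l a1 a2 3 by simp
    have "UU * ?L = ?A * ?L + ?B * ?L" unfolding UU_def using cA cB cL by (simp add: add_mult_distrib_mat[of _ ?D ?D])
    moreover have "?L * UU = ?L * ?A + ?L * ?B" unfolding UU_def using cA cB cL by (simp add: mult_add_distrib_mat[of _ ?D ?D])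
    moreover have "(-1) \<cdot>\<^sub>m (?L * ?A) + (-1) \<cdot>\<^sub>m (?L * ?B) = (-1) \<cdot>\<^sub>m (?L * ?A + ?L * ?B)"
      using cA cB cL by (intro eq_matI) (auto simp: algebra_simps)
    ultimately show ?thesis using 3 x1 x2 by (simp add: tau_def)
  qed
qed



definition "tauh R = (if a \<in> set R \<and> a + 1 \<in> set R then R else map (tau a) R)"

lemma tau_range: "x \<in> {1..n} \<Longrightarrow> tau a x \<in> {1..n}"
  using a1 a2 by (auto simp: tau_def)

lemma tau_tau: "tau a (tau a x) = x" by (auto simp: tau_def)

lemma tauh_Iset: "R \<in> Iset n q \<Longrightarrow> tauh R \<in> Iset n q"
proof -
  assume R: "R \<in> Iset n q"
  show ?thesis
  proof (cases "a \<in> set R \<and> a + 1 \<in> set R")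
    case True then show ?thesis using R by (simp add: tauh_def)
  next
    case False
    have "sorted_wrt (\<lambda>x y. tau a x < tau a y) R"
      by (rule sorted_wrt_mono_rel[of _ "(<)"]) (use R False in \<open>auto simp: Iset_def tau_def\<close>)
    moreover have "set (map (tau a) R) \<subseteq> {1..n}" using R tau_range by (auto simp: Iset_def)
    ultimately show ?thesis using R False by (simp add: tauh_def Iset_def sorted_wrt_map)
  qed
qed

lemma tauh_tauh: "tauh (tauh R) = R"
proof (cases "a \<in> set R \<and> a + 1 \<in> set R")
  case True then show ?thesis by (simp add: tauh_def)
next
  case False
  have "\<not> (a \<in> set (map (tau a) R) \<and> a + 1 \<in> set (map (tau a) R))"
    using False by (auto simp: tau_def split: if_splits)
  then have e2: "tauh (map (tau a) R) = map (tau a) (map (tau a) R)" unfolding tauh_def by (rule if_not_P)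
  have e1: "tauh R = map (tau a) R" unfolding tauh_def using False by (rule if_not_P)
  have "tauh (tauh R) = map (tau a) (map (tau a) R)" using e1 e2 by simp
  then show ?thesis by (simp add: comp_def tau_tau)
qed


lemma U_mprod_psi: "set xs \<subseteq> {1..n} \<Longrightarrow> \<exists>c. c * c = 1 \<and>
  UU * mprod n (map (psi n) xs) = c \<cdot>\<^sub>m (mprod n (map (psi n) (map (tau a) xs)) * UU)"
proof -
  assume xs: "set xs \<subseteq> {1..n}"
  let ?s = "\<lambda>l. if l = a \<or> l = a + 1 then 1 else (-1::complex)"
  have "UU * mprod n (map (psi n) xs) = prod_list (map ?s xs) \<cdot>\<^sub>m (mprod n (map (\<lambda>l. psi n (tau a l)) xs) * UU)"
  proof (rule intertw_list[OF cU])
    fix m assume m: "m \<in> set xs"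
    then have m1: "1 \<le> m" "m \<le> n" using xs by auto
    show "psi n m \<in> carrier_mat (2 ^ (n div 2)) (2 ^ (n div 2))" using psi_carrier ev m1 by simp
    have "tau a m \<in> {1..n}" using tau_range m1 by simp
    then show "psi n (tau a m) \<in> carrier_mat (2 ^ (n div 2)) (2 ^ (n div 2))" using psi_carrier ev by simp
    show "UU * psi n m = ?s m \<cdot>\<^sub>m (psi n (tau a m) * UU)" using U_psi m1 by simp
  qed
  moreover have "prod_list (map ?s xs) * prod_list (map ?s xs) = 1" by (rule prod_list_sq) auto
  moreover have "map (psi n) (map (tau a) xs) = map (\<lambda>l. psi n (tau a l)) xs" by simp
  ultimately show ?thesis by (intro exI[of _ "prod_list (map ?s xs)"]) (simp add: comp_def)
qed

lemma PsiR_swap: "R \<in> Iset n q \<Longrightarrow> \<exists>e. e * e = 1 \<and> PsiR n (map (tau a) R) = e \<cdot>\<^sub>m PsiR n (tauh R)"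
proof -
  assume R: "R \<in> Iset n q"
  show ?thesis
  proof (cases "a \<in> set R \<and> a + 1 \<in> set R")
    case False
    then have "tauh R = map (tau a) R" unfolding tauh_def by (rule if_not_P)
    then show ?thesis by (intro exI[of _ 1]) (simp add: one_smult_mat)
  next
    case True
    let ?D = "2^(n div 2)" and ?A = "psi n a" and ?B = "psi n (Suc a)"
    obtain xs ys where R': "R = xs @ a # Suc a # ys" and xs: "\<forall>x\<in>set xs. x < a" and ys: "\<forall>y\<in>set ys. Suc a < y"
      using split_adj[of R a] R True by (auto simp: Iset_def)
    have th: "tauh R = R" using True by (simp add: tauh_def)
    have mx: "map (tau a) xs = xs" using xs by (intro map_idI) (auto simp: tau_def)
    have my: "map (tau a) ys = ys" using ys by (intro map_idI) (auto simp: tau_def)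
    have mR: "map (tau a) R = xs @ Suc a # a # ys" using R' mx my by (simp add: tau_def)
    have setR: "set R \<subseteq> {1..n}" using R by (auto simp: Iset_def)
    have cps: "\<And>zs. set zs \<subseteq> set R \<Longrightarrow> set (map (psi n) zs) \<subseteq> carrier_mat ?D ?D"
      using setR by (auto intro!: psi_carrier[OF ev])
    have cX: "set (map (psi n) xs) \<subseteq> carrier_mat ?D ?D" using cps[of xs] R' by auto
    have cY: "set (map (psi n) ys) \<subseteq> carrier_mat ?D ?D" using cps[of ys] R' by auto
    have cA: "?A \<in> carrier_mat ?D ?D" using cA by simp
    have cB: "?B \<in> carrier_mat ?D ?D" using cB by simp
    have M1: "mprod n (map (psi n) xs) \<in> carrier_mat ?D ?D" using mprod_carrier cX by blast
    have M2: "mprod n (map (psi n) ys) \<in> carrier_mat ?D ?D" using mprod_carrier cY by blast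
    have BA': "?B * ?A = (-1) \<cdot>\<^sub>m (?A * ?B)" using BA by simp
    have "mprod n (map (psi n) (map (tau a) R)) = mprod n (map (psi n) xs) * (?B * (?A * mprod n (map (psi n) ys)))"
      unfolding mR using cX cA cB cY by (simp add: mprod_append mprod_Cons)
    also have "\<dots> = mprod n (map (psi n) xs) * ((?B * ?A) * mprod n (map (psi n) ys))"
      using cA cB M2 by simp
    also have "\<dots> = mprod n (map (psi n) xs) * ((-1) \<cdot>\<^sub>m ((?A * ?B) * mprod n (map (psi n) ys)))"
      using cA cB M2 by (simp add: BA' mult_smult_assoc_mat[of _ ?D ?D])
    also have "\<dots> = (-1) \<cdot>\<^sub>m (mprod n (map (psi n) xs) * (?A * (?B * mprod n (map (psi n) ys))))"
    proof -
      have cABM: "?A * (?B * mprod n (map (psi n) ys)) \<in> carrier_mat ?D ?D" using cA cB M2 by simp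
      show ?thesis using cA cB M1 M2 by (simp add: mult_smult_distrib[OF M1 cABM])
    qed
    also have "\<dots> = (-1) \<cdot>\<^sub>m mprod n (map (psi n) R)"
      unfolding R' using cX cA cB cY by (simp add: mprod_append mprod_Cons)
    finally have "mprod n (map (psi n) (map (tau a) R)) = (-1) \<cdot>\<^sub>m mprod n (map (psi n) R)" .
    then have "PsiR n (map (tau a) R) = (-1) \<cdot>\<^sub>m PsiR n R"
      by (simp add: PsiR_def smult_smult_mat mult.commute)
    then show ?thesis using th by (intro exI[of _ "-1"]) simp
  qed
qed

lemma U_PsiR: "R \<in> Iset n q \<Longrightarrow> \<exists>c. c * c = 1 \<and> UU * PsiR n R = c \<cdot>\<^sub>m (PsiR n (tauh R) * UU)"
proof -
  assume R: "R \<in> Iset n q"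
  let ?D = "2^(n div 2)"
  have setR: "set R \<subseteq> {1..n}" using R by (auto simp: Iset_def)
  obtain c where c: "c * c = 1" "UU * mprod n (map (psi n) R) = c \<cdot>\<^sub>m (mprod n (map (psi n) (map (tau a) R)) * UU)"
    using U_mprod_psi[OF setR] by blast
  obtain e where e: "e * e = 1" "PsiR n (map (tau a) R) = e \<cdot>\<^sub>m PsiR n (tauh R)"
    using PsiR_swap[OF R] by blast
  have cM: "mprod n (map (psi n) R) \<in> carrier_mat ?D ?D"
    using setR by (intro mprod_carrier) (auto intro!: psi_carrier[OF ev])
  have cM': "mprod n (map (psi n) (map (tau a) R)) \<in> carrier_mat ?D ?D"
    using setR tau_range by (intro mprod_carrier) (auto intro!: psi_carrier[OF ev])
  have cP: "PsiR n (tauh R) \<in> carrier_mat ?D ?D"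
    using tauh_Iset[OF R] unfolding PsiR_def Iset_def
    by (intro smult_carrier_mat mprod_carrier) (auto intro!: psi_carrier[OF ev])
  let ?k = "\<i> ^ (length R div 2)"
  have "UU * PsiR n R = ?k \<cdot>\<^sub>m (UU * mprod n (map (psi n) R))"
    unfolding PsiR_def using cU cM by (simp add: mult_smult_distrib)
  also have "\<dots> = c \<cdot>\<^sub>m ((?k \<cdot>\<^sub>m mprod n (map (psi n) (map (tau a) R))) * UU)"
    using c cM' cU by (simp add: mult_smult_assoc_mat[of _ ?D ?D] smult_smult_mat mult.commute)
  also have "?k \<cdot>\<^sub>m mprod n (map (psi n) (map (tau a) R)) = PsiR n (map (tau a) R)"
    by (simp add: PsiR_def)
  also have "c \<cdot>\<^sub>m (PsiR n (map (tau a) R) * UU) = (c * e) \<cdot>\<^sub>m (PsiR n (tauh R) * UU)"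
    using e cP cU by (simp add: mult_smult_assoc_mat[of _ ?D ?D] smult_smult_mat)
  finally show ?thesis using c e by (intro exI[of _ "c * e"]) (simp add: algebra_simps)
qed


definition "delta R = (SOME c. c * c = 1 \<and> UU * PsiR n R = c \<cdot>\<^sub>m (PsiR n (tauh R) * UU))"

lemma delta: "R \<in> Iset n q \<Longrightarrow> delta R * delta R = 1 \<and> UU * PsiR n R = delta R \<cdot>\<^sub>m (PsiR n (tauh R) * UU)"
  unfolding delta_def by (rule someI_ex) (rule U_PsiR)

lemma PsiR_carrier: "R \<in> Iset n q \<Longrightarrow> PsiR n R \<in> carrier_mat (2^(n div 2)) (2^(n div 2))"
  unfolding PsiR_def Iset_def
  by (intro smult_carrier_mat mprod_carrier) (auto intro!: psi_carrier[OF ev])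

lemma word_inv:
  assumes al: "\<alpha> \<in> {1..k} \<rightarrow>\<^sub>E Iset n q" and P: "P \<in> pair_partitions k" and ker: "ker_ge \<alpha> P"
  shows "trword n k (\<lambda>m. tauh (\<alpha> m)) = trword n k \<alpha>"
proof -
  let ?D = "2^(n div 2)" and ?ms = "[1..<k+1]"
  let ?W = "mprod n (map (\<lambda>m. PsiR n (\<alpha> m)) ?ms)"
  let ?W' = "mprod n (map (\<lambda>m. PsiR n (tauh (\<alpha> m))) ?ms)"
  have inI: "\<And>m. m \<in> set ?ms \<Longrightarrow> \<alpha> m \<in> Iset n q" using al by auto
  have "UU * ?W = prod_list (map (\<lambda>m. delta (\<alpha> m)) ?ms) \<cdot>\<^sub>m (?W' * UU)"
  proof (rule intertw_list[OF cU])
    fix m assume m: "m \<in> set ?ms"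
    show "PsiR n (\<alpha> m) \<in> carrier_mat ?D ?D" using PsiR_carrier inI[OF m] by blast
    show "PsiR n (tauh (\<alpha> m)) \<in> carrier_mat ?D ?D" using PsiR_carrier tauh_Iset inI[OF m] by blast
    show "UU * PsiR n (\<alpha> m) = delta (\<alpha> m) \<cdot>\<^sub>m (PsiR n (tauh (\<alpha> m)) * UU)" using delta inI[OF m] by blast
  qed
  moreover have "prod_list (map (\<lambda>m. delta (\<alpha> m)) ?ms) = (\<Prod>m\<in>{1..k}. delta (\<alpha> m))"
  proof -
    have "set ?ms = {1..k}" by auto
    then show ?thesis using prod.distinct_set_conv_list[of ?ms "\<lambda>m. delta (\<alpha> m)"] by simp
  qed
  moreover have "(\<Prod>m\<in>{1..k}. delta (\<alpha> m)) = 1"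
  proof (rule pair_prod[OF P ker])
    fix m assume "m \<in> {1..k}"
    then have "\<alpha> m \<in> Iset n q" using al by auto
    then show "delta (\<alpha> m) * delta (\<alpha> m) = 1" using delta by blast
  qed
  ultimately have I: "UU * ?W = 1 \<cdot>\<^sub>m (?W' * UU)" by simp
  have cW: "?W \<in> carrier_mat ?D ?D" using inI PsiR_carrier by (intro mprod_carrier) auto
  have cW': "?W' \<in> carrier_mat ?D ?D"
  proof (intro mprod_carrier subsetI)
    fix M assume "M \<in> set (map (\<lambda>m. PsiR n (tauh (\<alpha> m))) ?ms)"
    then obtain m where m: "m \<in> set ?ms" "M = PsiR n (tauh (\<alpha> m))" by auto
    show "M \<in> carrier_mat ?D ?D" using m PsiR_carrier tauh_Iset inI[OF m(1)] by blast
  qed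
  have "trc ?W = 1 * trc ?W'" by (rule intertw_trc[OF cU cW cW' UU_sq I])
  then show ?thesis using cW cW' by (simp add: trword_def ntr_trc)
qed


lemma trword_cong: "(\<And>m. m \<in> {1..k} \<Longrightarrow> \<alpha> m = \<beta> m) \<Longrightarrow> trword n k \<alpha> = trword n k \<beta>"
  unfolding trword_def by (rule arg_cong[where f = "\<lambda>x. ntr (mprod n x)"]) auto

lemma sum_inv:
  assumes P: "P \<in> pair_partitions k" and V: "V \<in> P" and R: "R \<in> Iset n q"
  shows "(\<Sum>\<alpha> \<in> {\<alpha>. \<alpha> \<in> {1..k} \<rightarrow>\<^sub>E Iset n q \<and> ker_ge \<alpha> P \<and> (\<forall>x\<in>V. \<alpha> x = tauh R)}. trword n k \<alpha>)
       = (\<Sum>\<alpha> \<in> {\<alpha>. \<alpha> \<in> {1..k} \<rightarrow>\<^sub>E Iset n q \<and> ker_ge \<alpha> P \<and> (\<forall>x\<in>V. \<alpha> x = R)}. trword n k \<alpha>)"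
proof -
  have po: "partition_on {1..k} P" using P by (auto simp: pair_partitions_def)
  have Bsub: "\<And>B. B \<in> P \<Longrightarrow> B \<subseteq> {1..k}" using po by (auto simp: partition_on_def)
  define g where "g \<alpha> = restrict (\<lambda>m. tauh (\<alpha> m)) {1..k}" for \<alpha> :: "nat \<Rightarrow> nat list"
  have gg: "g (g \<alpha>) = \<alpha>" if "\<alpha> \<in> {1..k} \<rightarrow>\<^sub>E Iset n q" for \<alpha>
  proof
    fix x show "g (g \<alpha>) x = \<alpha> x" using that by (cases "x \<in> {1..k}") (auto simp: g_def tauh_tauh)
  qed
  have gmem: "g \<alpha> \<in> {\<alpha>. \<alpha> \<in> {1..k} \<rightarrow>\<^sub>E Iset n q \<and> ker_ge \<alpha> P \<and> (\<forall>x\<in>V. \<alpha> x = tauh S)}"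
    if "\<alpha> \<in> {\<alpha>. \<alpha> \<in> {1..k} \<rightarrow>\<^sub>E Iset n q \<and> ker_ge \<alpha> P \<and> (\<forall>x\<in>V. \<alpha> x = S)}" for \<alpha> S
  proof -
    have a: "\<alpha> \<in> {1..k} \<rightarrow>\<^sub>E Iset n q" "ker_ge \<alpha> P" "\<forall>x\<in>V. \<alpha> x = S" using that by auto
    have "g \<alpha> \<in> {1..k} \<rightarrow>\<^sub>E Iset n q" using a(1) tauh_Iset by (auto simp: g_def)
    moreover have "ker_ge (g \<alpha>) P" using a(2) Bsub unfolding ker_ge_def g_def
      by (metis (no_types, lifting) restrict_apply' subsetD)
    moreover have "\<forall>x\<in>V. g \<alpha> x = tauh S" using a(3) Bsub[OF V] by (auto simp: g_def)
    ultimately show ?thesis by blast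
  qed
  have tw: "trword n k (g \<alpha>) = trword n k \<alpha>" if "\<alpha> \<in> {\<alpha>. \<alpha> \<in> {1..k} \<rightarrow>\<^sub>E Iset n q \<and> ker_ge \<alpha> P \<and> (\<forall>x\<in>V. \<alpha> x = S)}" for \<alpha> S
  proof -
    have "trword n k (g \<alpha>) = trword n k (\<lambda>m. tauh (\<alpha> m))" by (rule trword_cong) (simp add: g_def)
    also have "\<dots> = trword n k \<alpha>" using that word_inv P by auto
    finally show ?thesis .
  qed
  show ?thesis
  proof (rule sum.reindex_bij_witness[where i = g and j = g])
    fix \<alpha> assume a: "\<alpha> \<in> {\<alpha>. \<alpha> \<in> {1..k} \<rightarrow>\<^sub>E Iset n q \<and> ker_ge \<alpha> P \<and> (\<forall>x\<in>V. \<alpha> x = tauh R)}"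
    show "g (g \<alpha>) = \<alpha>" using a gg by auto
    show "g \<alpha> \<in> {\<alpha>. \<alpha> \<in> {1..k} \<rightarrow>\<^sub>E Iset n q \<and> ker_ge \<alpha> P \<and> (\<forall>x\<in>V. \<alpha> x = R)}"
      using gmem[OF a] by (simp add: tauh_tauh)
    show "trword n k (g \<alpha>) = trword n k \<alpha>" by (rule tw[OF a])
  next
    fix \<alpha> assume a: "\<alpha> \<in> {\<alpha>. \<alpha> \<in> {1..k} \<rightarrow>\<^sub>E Iset n q \<and> ker_ge \<alpha> P \<and> (\<forall>x\<in>V. \<alpha> x = R)}"
    show "g (g \<alpha>) = \<alpha>" using a gg by auto
    show "g \<alpha> \<in> {\<alpha>. \<alpha> \<in> {1..k} \<rightarrow>\<^sub>E Iset n q \<and> ker_ge \<alpha> P \<and> (\<forall>x\<in>V. \<alpha> x = tauh R)}" by (rule gmem[OF a])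
  qed
qed

end


lemma Iset_finite: "finite (Iset n q)"
proof -
  have "Iset n q \<subseteq> {xs. set xs \<subseteq> {1..n} \<and> length xs = q}" by (auto simp: Iset_def)
  moreover have "finite {xs. set xs \<subseteq> {1..n} \<and> length xs = q}" by (rule finite_lists_length_eq) simp
  ultimately show ?thesis by (rule finite_subset)
qed

lemma gap:
  assumes R: "R \<in> Iset n q" and q: "1 \<le> q" and ne: "R \<noteq> [1..<q+1]"
  shows "\<exists>a. 1 \<le> a \<and> a + 1 \<le> n \<and> a + 1 \<in> set R \<and> a \<notin> set R"
proof (rule ccontr)
  assume "\<not> ?thesis"
  then have cl: "\<And>a. 1 \<le> a \<Longrightarrow> a + 1 \<in> set R \<Longrightarrow> a \<in> set R" using R by (auto simp: Iset_def)
  have sR: "set R \<subseteq> {1..n}" and sw: "sorted_wrt (<) R" and len: "length R = q" using R by (auto simp: Iset_def)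
  have down: "y + d \<in> set R \<Longrightarrow> 1 \<le> y \<Longrightarrow> y \<in> set R" for y d
  proof (induction d)
    case 0 then show ?case by simp
  next
    case (Suc d)
    then have "y + d + 1 \<in> set R" by simp
    then have "y + d \<in> set R" using cl Suc.prems(2) by (metis le_add1 order_trans)
    then show ?case using Suc by simp
  qed
  have Rne: "set R \<noteq> {}" using len q by auto
  define M where "M = Max (set R)"
  have M: "M \<in> set R" unfolding M_def using Rne by simp
  have s1: "set R \<subseteq> {1..M}" using sR unfolding M_def by auto
  have s2: "{1..M} \<subseteq> set R"
  proof
    fix y assume y: "y \<in> {1..M}"
    then have "y + (M - y) \<in> set R" using M by simp
    then show "y \<in> set R" using down[of y "M - y"] y by auto
  qed
  have dist: "distinct R" using sw by (simp add: strict_sorted_iff)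
  have sRM: "set R = {1..M}" using s1 s2 by blast
  have cq: "card (set R) = q" using dist len by (simp add: distinct_card)
  have "card {1..M} = q" using sRM cq by simp
  then have Mq: "M = q" by simp
  have "set [1..<q+1] = {1..q}" by (simp only: set_upt atLeastLessThanSuc_atLeastAtMost Suc_eq_plus1[symmetric])
  then have "set [1..<q+1] = set R" using sRM Mq by simp
  then have "[1..<q+1] = R" using sw by (intro strict_sorted_equal[OF sw sorted_wrt_upt]) simp
  then show False using ne by simp
qed

lemma map_tau_id: "a \<notin> set xs \<Longrightarrow> a + 1 \<notin> set xs \<Longrightarrow> map (tau a) xs = xs"
  by (induction xs) (auto simp: tau_def)

lemma sum_tau: "distinct R \<Longrightarrow> a \<notin> set R \<Longrightarrow> a + 1 \<in> set R \<Longrightarrow> sum_list (map (tau a) R) + 1 = sum_list R"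
proof (induction R)
  case Nil then show ?case by simp
next
  case (Cons x xs)
  show ?case
  proof (cases "x = a + 1")
    case True
    then have h: "a + 1 \<notin> set xs" "a \<notin> set xs" using Cons.prems by auto
    have m: "map (tau a) xs = xs" by (rule map_tau_id[OF h(2) h(1)])
    have t: "tau a x = a" using True by (simp add: tau_def)
    show ?thesis using t m True by simp
  next
    case False
    then have "x \<noteq> a" using Cons.prems by auto
    then have t: "tau a x = x" using False by (simp add: tau_def)
    have h: "distinct xs" "a \<notin> set xs" "a + 1 \<in> set xs" using Cons.prems False by auto
    have "sum_list (map (tau a) xs) + 1 = sum_list xs" by (rule Cons.IH[OF h])
    then show ?thesis using t by simp
  qed
qed


lemma all_equal:
  assumes ev: "even n" and q: "1 \<le> q" and P: "P \<in> pair_partitions k" and V: "V \<in> P"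
  shows "R \<in> Iset n q \<Longrightarrow>
    (\<Sum>\<alpha> \<in> {\<alpha>. \<alpha> \<in> {1..k} \<rightarrow>\<^sub>E Iset n q \<and> ker_ge \<alpha> P \<and> (\<forall>x\<in>V. \<alpha> x = R)}. trword n k \<alpha>)
  = (\<Sum>\<alpha> \<in> {\<alpha>. \<alpha> \<in> {1..k} \<rightarrow>\<^sub>E Iset n q \<and> ker_ge \<alpha> P \<and> (\<forall>x\<in>V. \<alpha> x = [1..<q+1])}. trword n k \<alpha>)"
proof (induction "sum_list R" arbitrary: R rule: less_induct)
  case less
  show ?case
  proof (cases "R = [1..<q+1]")
    case True then show ?thesis by simp
  next
    case False
    obtain a where a: "1 \<le> a" "a + 1 \<le> n" "a + 1 \<in> set R" "a \<notin> set R"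
      using gap[OF less.prems q False] by blast
    have nb: "\<not> (a \<in> set R \<and> a + 1 \<in> set R)" using a by blast
    have th: "tauh a R = map (tau a) R" unfolding tauh_def[OF ev a(1) a(2)] using nb by (rule if_not_P)
    have R': "tauh a R \<in> Iset n q" by (rule tauh_Iset[OF ev a(1) a(2) less.prems])
    have dist: "distinct R" using less.prems by (auto simp: Iset_def strict_sorted_iff)
    have "sum_list (map (tau a) R) + 1 = sum_list R" by (rule sum_tau[OF dist a(4) a(3)])
    then have lt: "sum_list (tauh a R) < sum_list R" using th by simp
    show ?thesis using less.hyps[OF lt R'] sum_inv[OF ev a(1) a(2) P V less.prems] by simp
  qed
qed


theorem lemma3p4:
  fixes n q k :: nat and P :: "nat set set" and V :: "nat set" and R :: "nat list"
  assumes "even n" and "1 \<le> q" and "q \<le> n div 2"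
    and "P \<in> pair_partitions k" and "V \<in> P" and "R \<in> Iset n q"
  shows "(\<Sum>\<alpha> \<in> {\<alpha>. \<alpha> \<in> {1..k} \<rightarrow>\<^sub>E Iset n q \<and> ker_ge \<alpha> P \<and> (\<forall>x\<in>V. \<alpha> x = R)}. trword n k \<alpha>)
           / of_real (real (card (Iset n q)) powr ((real k - 2) / 2))
         = S n q k P"
proof -
  note ev = assms(1) and q = assms(2) and P = assms(4) and V = assms(5) and R = assms(6)
  define F where "F R' = (\<Sum>\<alpha> \<in> {\<alpha>. \<alpha> \<in> {1..k} \<rightarrow>\<^sub>E Iset n q \<and> ker_ge \<alpha> P \<and> (\<forall>x\<in>V. \<alpha> x = R')}. trword n k \<alpha>)" for R'
  define SS where "SS = {\<alpha>. \<alpha> \<in> {1..k} \<rightarrow>\<^sub>E Iset n q \<and> ker_ge \<alpha> P}"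
  define N where "N = card (Iset n q)"
  have eq: "F R' = F R" if "R' \<in> Iset n q" for R'
    using all_equal[OF ev q P V that] all_equal[OF ev q P V R] unfolding F_def by simp
  have po: "partition_on {1..k} P" and c2: "card V = 2" using P V by (auto simp: pair_partitions_def)
  have Vsub: "V \<subseteq> {1..k}" using po V by (auto simp: partition_on_def)
  obtain v0 where v0: "v0 \<in> V" using c2 by (metis card.empty ex_in_conv zero_neq_numeral)
  have finS: "finite SS"
    by (rule finite_subset[of _ "{1..k} \<rightarrow>\<^sub>E Iset n q"]) (auto simp: SS_def intro!: finite_PiE Iset_finite)
  have img: "(\<lambda>\<alpha>. \<alpha> v0) ` SS \<subseteq> Iset n q" using v0 Vsub by (auto simp: SS_def)
  have fib: "{\<alpha>. \<alpha> \<in> SS \<and> \<alpha> v0 = R'} = {\<alpha>. \<alpha> \<in> {1..k} \<rightarrow>\<^sub>E Iset n q \<and> ker_ge \<alpha> P \<and> (\<forall>x\<in>V. \<alpha> x = R')}" for R'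
    using v0 V unfolding SS_def ker_ge_def by blast
  have "(\<Sum>\<alpha>\<in>SS. trword n k \<alpha>) = (\<Sum>R'\<in>Iset n q. F R')"
    using sum.group[OF finS Iset_finite img, of "trword n k"] unfolding fib F_def by simp
  also have "\<dots> = (\<Sum>R'\<in>Iset n q. F R)" using eq by simp
  also have "\<dots> = of_nat N * F R" unfolding N_def by simp
  finally have full: "(\<Sum>\<alpha>\<in>SS. trword n k \<alpha>) = of_nat N * F R" .
  have Npos: "N > 0" unfolding N_def using R Iset_finite card_gt_0_iff by blast
  have pw: "real N powr (real k / 2) = real N powr ((real k - 2) / 2) * real N"
  proof -
    have "real k / 2 = (real k - 2) / 2 + 1" by (simp add: field_simps)
    then have "real N powr (real k / 2) = real N powr ((real k - 2) / 2 + 1)" by (simp only:)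
    also have "\<dots> = real N powr ((real k - 2) / 2) * real N powr 1" by (rule powr_add)
    finally show ?thesis using Npos by simp
  qed
  have pp: "real N powr ((real k - 2) / 2) > 0" using Npos by simp
  show ?thesis
    unfolding S_def SS_def[symmetric] full F_def[symmetric] N_def[symmetric] pw
    using pp Npos by (simp add: field_simps)
qed

end
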